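(* Let $(C,f,P,Q)$ be a quadratic morphism over a field $K$ of characteristic $\ne2$. The following are equivalent: (a) the postcritical orbit $\{f^n(P),f^n(Q)\mid n\ge1\}$ has cardinality $\ge3$; (b) at least one of $f(P)$, $f(Q)$ is distinct from both $P$ and $Q$; (c) $(C,f,P,Q)$ is not isomorphic to $(\mathbb{P}^1_K,\ x\mapsto ax^{\pm2},\ 0,\ \infty)$ for any choice of sign and any $a\in K^\times$. Moreover, these conditions imply that the automorphism group of $(C,f,P,Q)$ is trivial.
   Context: A quadratic morphism over a scheme $S$ (over $\mathrm{Spec}\,\mathbb{Z}[\tfrac12]$) is a quadruple $(C,f,P,Q)$ where $C$ is a curve over $S$ that is Zariski-locally on $S$ isomorphic to $\mathbb{P}^1\times S$, $f\colon C\to C$ is an $S$-morphism of degree $2$ on every fiber, and $P,Q\in C(S)$ are sections whose images are precisely the critical points of $f$ (the points where $df=0$). Isomorphisms (and automorphisms) of quadratic morphisms are isomorphisms of curves over $S$ commuting with the maps and sending $P$ to $P'$ and $Q$ to $Q'$. $f^n$ denotes the $n$-th iterate of $f$. *)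

theory Defs
  imports Main
begin

text \<open>
  Over a field, a curve Zariski-locally isomorphic to P^1 is isomorphic to P^1_K,
  so we take C = P^1_K.  A point of P^1(K) is represented by a nonzero vector (x,y)
  (homogeneous coordinates [x:y]); two vectors represent the same point iff they are
  proportional by a nonzero scalar.  A degree-2 self-map of P^1_K is represented by a
  pair (F,G) of binary quadratic forms with nonzero resultant, acting by
  [x:y] to [F(x,y):G(x,y)]; (F,G) and (cF,cG) define the same morphism.
  Automorphisms of P^1_K are given by invertible 2x2 matrices (al,be,ga,de),
  acting by [x:y] to [al x + be y : ga x + de y], up to nonzero scalars.
\<close>

type_synonym 'k qform = "'k \<times> 'k \<times> 'k"
type_synonym 'k pt = "'k \<times> 'k"
type_synonym 'k mat2 = "'k \<times> 'k \<times> 'k \<times> 'k"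

definition qf_eval :: "'k::field qform \<Rightarrow> 'k pt \<Rightarrow> 'k" where
  "qf_eval F v = (case F of (a0,a1,a2) \<Rightarrow> case v of (x,y) \<Rightarrow>
      a0*x^2 + a1*x*y + a2*y^2)"

definition qf_scale :: "'k::field \<Rightarrow> 'k qform \<Rightarrow> 'k qform" where
  "qf_scale c F = (case F of (a0,a1,a2) \<Rightarrow> (c*a0, c*a1, c*a2))"

definition qf_add :: "'k::field qform \<Rightarrow> 'k qform \<Rightarrow> 'k qform" where
  "qf_add F G = (case F of (a0,a1,a2) \<Rightarrow> case G of (b0,b1,b2) \<Rightarrow> (a0+b0, a1+b1, a2+b2))"

text \<open>Coefficients of the form (x,y) |-> F(al x + be y, ga x + de y).\<close>
definition qf_subst :: "'k::field qform \<Rightarrow> 'k mat2 \<Rightarrow> 'k qform" where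
  "qf_subst F M = (case F of (a0,a1,a2) \<Rightarrow> case M of (al,be,ga,de) \<Rightarrow>
     (a0*al^2 + a1*al*ga + a2*ga^2,
      2*a0*al*be + a1*(al*de + be*ga) + 2*a2*ga*de,
      a0*be^2 + a1*be*de + a2*de^2))"

text \<open>Resultant of the binary forms F and G (Sylvester resultant, expanded).\<close>
definition qf_res :: "'k::field qform \<Rightarrow> 'k qform \<Rightarrow> 'k" where
  "qf_res F G = (case F of (a0,a1,a2) \<Rightarrow> case G of (b0,b1,b2) \<Rightarrow>
     (a0*b2 - a2*b0)^2 - (a0*b1 - a1*b0)*(a1*b2 - a2*b1))"

text \<open>Jacobian (Wronskian) F_X G_Y - F_Y G_X, a binary quadratic form whose zero locus
  (over an algebraic closure) is the critical locus of [F:G].\<close>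
definition qf_jac :: "'k::field qform \<Rightarrow> 'k qform \<Rightarrow> 'k qform" where
  "qf_jac F G = (case F of (a0,a1,a2) \<Rightarrow> case G of (b0,b1,b2) \<Rightarrow>
     (2*a0*b1 - 2*a1*b0, 4*(a0*b2 - a2*b0), 2*a1*b2 - 2*a2*b1))"

text \<open>The quadratic form l_P l_Q, where l_P(X,Y) = p2 X - p1 Y vanishes exactly at [p1:p2].\<close>
definition qf_linprod :: "'k::field pt \<Rightarrow> 'k pt \<Rightarrow> 'k qform" where
  "qf_linprod P Q = (case P of (p1,p2) \<Rightarrow> case Q of (q1,q2) \<Rightarrow>
     (p2*q2, - (p2*q1 + p1*q2), p1*q1))"

definition pt_scale :: "'k::field \<Rightarrow> 'k pt \<Rightarrow> 'k pt" where
  "pt_scale c v = (case v of (x,y) \<Rightarrow> (c*x, c*y))"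

definition proj_eq :: "'k::field pt \<Rightarrow> 'k pt \<Rightarrow> bool" where
  "proj_eq u v \<longleftrightarrow> (\<exists>c. c \<noteq> 0 \<and> u = pt_scale c v)"

text \<open>The point of P^1(K) represented by a vector (its class of representatives).\<close>
definition pt_class :: "'k::field pt \<Rightarrow> 'k pt set" where
  "pt_class u = {v. proj_eq v u}"

definition map_vec :: "'k::field qform \<Rightarrow> 'k qform \<Rightarrow> 'k pt \<Rightarrow> 'k pt" where
  "map_vec F G v = (qf_eval F v, qf_eval G v)"

definition mat_apply :: "'k::field mat2 \<Rightarrow> 'k pt \<Rightarrow> 'k pt" where
  "mat_apply M v = (case M of (al,be,ga,de) \<Rightarrow> case v of (x,y) \<Rightarrow> (al*x + be*y, ga*x + de*y))"

definition mat_det :: "'k::field mat2 \<Rightarrow> 'k" where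
  "mat_det M = (case M of (al,be,ga,de) \<Rightarrow> al*de - be*ga)"

text \<open>(P^1_K, [F:G], P, Q) is a quadratic morphism: [F:G] has degree 2 (nonzero resultant),
  P, Q are points of P^1(K), and the critical locus (zero locus of the Jacobian form, over an
  algebraic closure) is exactly {P,Q}, i.e. the Jacobian is a nonzero multiple of l_P l_Q.\<close>
definition quad_morph :: "'k::field qform \<Rightarrow> 'k qform \<Rightarrow> 'k pt \<Rightarrow> 'k pt \<Rightarrow> bool" where
  "quad_morph F G P Q \<longleftrightarrow> P \<noteq> (0,0) \<and> Q \<noteq> (0,0) \<and> qf_res F G \<noteq> 0 \<and>
     (\<exists>c. c \<noteq> 0 \<and> qf_jac F G = qf_scale c (qf_linprod P Q))"

text \<open>M : P^1 -> P^1 is an isomorphism from (P^1,[F:G],P,Q) to (P^1,[F':G'],P',Q'):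
  M o [F:G] = [F':G'] o M as morphisms (equality of the defining forms up to a common
  nonzero scalar), M P = P', M Q = Q'.\<close>
definition qm_iso_by :: "'k::field mat2 \<Rightarrow> 'k qform \<Rightarrow> 'k qform \<Rightarrow> 'k pt \<Rightarrow> 'k pt \<Rightarrow>
    'k qform \<Rightarrow> 'k qform \<Rightarrow> 'k pt \<Rightarrow> 'k pt \<Rightarrow> bool" where
  "qm_iso_by M F G P Q F' G' P' Q' \<longleftrightarrow> mat_det M \<noteq> 0 \<and>
     (case M of (al,be,ga,de) \<Rightarrow>
       (\<exists>lam. lam \<noteq> 0 \<and>
          qf_add (qf_scale al F) (qf_scale be G) = qf_scale lam (qf_subst F' M) \<and>
          qf_add (qf_scale ga F) (qf_scale de G) = qf_scale lam (qf_subst G' M))) \<and>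
     proj_eq (mat_apply M P) P' \<and> proj_eq (mat_apply M Q) Q'"

definition qm_isomorphic :: "'k::field qform \<Rightarrow> 'k qform \<Rightarrow> 'k pt \<Rightarrow> 'k pt \<Rightarrow>
    'k qform \<Rightarrow> 'k qform \<Rightarrow> 'k pt \<Rightarrow> 'k pt \<Rightarrow> bool" where
  "qm_isomorphic F G P Q F' G' P' Q' \<longleftrightarrow> (\<exists>M. qm_iso_by M F G P Q F' G' P' Q')"

text \<open>The automorphism group is trivial: every automorphism is the identity of P^1,
  i.e. its matrix is scalar.\<close>
definition qm_aut_trivial :: "'k::field qform \<Rightarrow> 'k qform \<Rightarrow> 'k pt \<Rightarrow> 'k pt \<Rightarrow> bool" where
  "qm_aut_trivial F G P Q \<longleftrightarrow> (\<forall>M. qm_iso_by M F G P Q F G P Q \<longrightarrow>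
     (case M of (al,be,ga,de) \<Rightarrow> be = 0 \<and> ga = 0 \<and> al = de))"

definition postcrit :: "'k::field qform \<Rightarrow> 'k qform \<Rightarrow> 'k pt \<Rightarrow> 'k pt \<Rightarrow> 'k pt set set" where
  "postcrit F G P Q = {pt_class ((map_vec F G ^^ n) P) | n. n \<ge> 1} \<union>
                      {pt_class ((map_vec F G ^^ n) Q) | n. n \<ge> 1}"

text \<open>Standard models with 0 = [0:1], infinity = [1:0], affine coordinate x = X/Y:
  x |-> a x^2 is [X:Y] |-> [a X^2 : Y^2]; x |-> a x^(-2) is [X:Y] |-> [a Y^2 : X^2].\<close>
definition pt_zero :: "'k::field pt" where "pt_zero = (0,1)"
definition pt_inf :: "'k::field pt" where "pt_inf = (1,0)"

definition std_plus_F :: "'k::field \<Rightarrow> 'k qform" where "std_plus_F a = (a,0,0)"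
definition std_plus_G :: "'k::field qform" where "std_plus_G = (0,0,1)"
definition std_minus_F :: "'k::field \<Rightarrow> 'k qform" where "std_minus_F a = (0,0,a)"
definition std_minus_G :: "'k::field qform" where "std_minus_G = (1,0,0)"

end

theory Submission
  imports Defs
begin


lemma qm_unfold:
  assumes "quad_morph (a0,a1,a2) (b0,b1,b2) (p1,p2) (q1,q2)"
  obtains c where "c \<noteq> 0" "(p1,p2) \<noteq> (0,0)" "(q1,q2) \<noteq> (0,0)"
   "(a0*b2 - a2*b0)^2 - (a0*b1 - a1*b0)*(a1*b2 - a2*b1) \<noteq> (0::'k::field)"
   "2*a0*b1 - 2*a1*b0 = c*(p2*q2)" "4*(a0*b2 - a2*b0) = c*(- (p2*q1 + p1*q2))"
   "2*a1*b2 - 2*a2*b1 = c*(p1*q1)"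
  using assms unfolding quad_morph_def qf_res_def qf_jac_def qf_scale_def qf_linprod_def
  by auto

lemma proj_eq_cross:
  fixes u1 u2 v1 v2 :: "'k::field"
  assumes "(u1,u2) \<noteq> (0,0)" "(v1,v2) \<noteq> (0,0)"
  shows "proj_eq (u1,u2) (v1,v2) \<longleftrightarrow> u1*v2 = u2*v1"
proof
  assume "proj_eq (u1,u2) (v1,v2)"
  then obtain c where "c \<noteq> 0" "(u1,u2) = (c*v1, c*v2)" unfolding proj_eq_def pt_scale_def by auto
  then show "u1*v2 = u2*v1" by auto
next
  assume h: "u1*v2 = u2*v1"
  show "proj_eq (u1,u2) (v1,v2)"
  proof (cases "v1 = 0")
    case True
    then have "v2 \<noteq> 0" using assms by auto
    with True h have "u1 = 0" by auto
    with assms have "u2 \<noteq> 0" by auto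
    show ?thesis unfolding proj_eq_def pt_scale_def
      apply (rule exI[of _ "u2/v2"]) using True \<open>u1 = 0\<close> \<open>v2\<noteq>0\<close> \<open>u2\<noteq>0\<close> by auto
  next
    case False
    have "u1 \<noteq> 0"
    proof
      assume "u1 = 0" then have "u2 = 0" using h False by auto
      with \<open>u1 = 0\<close> assms show False by auto
    qed
    show ?thesis unfolding proj_eq_def pt_scale_def
      apply (rule exI[of _ "u1/v1"]) using False \<open>u1\<noteq>0\<close> h
      by (auto simp: field_simps)
  qed
qed

lemma proj_eq_refl: "proj_eq u u"
  unfolding proj_eq_def pt_scale_def by (rule exI[of _ 1]) (auto split: prod.splits)
lemma proj_eq_sym: "proj_eq u v \<Longrightarrow> proj_eq v u"
proof -
  assume "proj_eq u v"
  then obtain c where c: "c \<noteq> 0" "u = pt_scale c v" unfolding proj_eq_def by auto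
  show ?thesis unfolding proj_eq_def
    by (rule exI[of _ "inverse c"]) (use c in \<open>auto simp: pt_scale_def split: prod.splits\<close>)
qed
lemma proj_eq_trans: "proj_eq u v \<Longrightarrow> proj_eq v w \<Longrightarrow> proj_eq u w"
proof -
  assume "proj_eq u v" "proj_eq v w"
  then obtain c d where c: "c \<noteq> 0" "u = pt_scale c v" "d \<noteq> 0" "v = pt_scale d w"
    unfolding proj_eq_def by auto
  show ?thesis unfolding proj_eq_def
    by (rule exI[of _ "c*d"]) (use c in \<open>auto simp: pt_scale_def split: prod.splits\<close>)
qed

lemma pt_class_eq_iff: "pt_class u = pt_class v \<longleftrightarrow> proj_eq u v"
proof
  assume "pt_class u = pt_class v"
  then have "u \<in> pt_class v" using proj_eq_refl[of u] unfolding pt_class_def by blast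
  then show "proj_eq u v" unfolding pt_class_def by auto
next
  assume "proj_eq u v"
  then show "pt_class u = pt_class v" unfolding pt_class_def
    using proj_eq_sym proj_eq_trans by blast
qed

lemma mv_simp: "map_vec (a0,a1,a2) (b0,b1,b2) (x,y) =
   (a0*x^2+a1*x*y+a2*y^2, b0*x^2+b1*x*y+b2*y^2)"
  by (simp add: map_vec_def qf_eval_def)

lemma mv_scale: "map_vec F G (pt_scale c X) = pt_scale (c^2) (map_vec F G X)"
  by (cases F; cases G; cases X) (simp add: map_vec_def qf_eval_def pt_scale_def algebra_simps power2_eq_square)

lemma proj_eq_mv: "proj_eq X Y \<Longrightarrow> proj_eq (map_vec F G X) (map_vec F G Y)"
  unfolding proj_eq_def using mv_scale by (metis power_not_zero)

lemma mv_nz: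
  fixes a0 a1 a2 b0 b1 b2 x y :: "'k::field"
  assumes "(a0*b2 - a2*b0)^2 - (a0*b1 - a1*b0)*(a1*b2 - a2*b1) \<noteq> 0" "(x,y) \<noteq> (0,0)"
  shows "map_vec (a0,a1,a2) (b0,b1,b2) (x,y) \<noteq> (0,0)"
proof
  assume "map_vec (a0,a1,a2) (b0,b1,b2) (x,y) = (0,0)"
  then have e: "a0*x^2 + a1*x*y + a2*y^2 = 0" "b0*x^2 + b1*x*y + b2*y^2 = 0" by (auto simp: mv_simp)
  have "x = 0" using e assms(1) by algebra
  moreover have "y = 0" using e assms(1) by algebra
  ultimately show False using assms(2) by auto
qed

lemma jacP:
  assumes "quad_morph (a0,a1,a2) (b0,b1,b2) (p1,p2) (q1,q2)"
  shows "2*(a0*b1 - a1*b0)*p1^2 + 4*(a0*b2-a2*b0)*p1*p2 + 2*(a1*b2-a2*b1)*p2^2 = (0::'k::field)"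
proof -
  obtain c where c: "2*a0*b1 - 2*a1*b0 = c*(p2*q2)" "4*(a0*b2 - a2*b0) = c*(- (p2*q1 + p1*q2))"
   "2*a1*b2 - 2*a2*b1 = c*(p1*q1)" using qm_unfold[OF assms] by metis
  show ?thesis using c by algebra
qed

lemma qm_sym: "quad_morph F G P Q \<Longrightarrow> quad_morph F G Q P"
  unfolding quad_morph_def qf_linprod_def by (auto split: prod.splits simp: algebra_simps qf_scale_def)

lemma indep:
  fixes a0 a1 a2 b0 b1 b2 p1 p2 q1 q2 :: "'k::field"
  assumes "quad_morph (a0,a1,a2) (b0,b1,b2) (p1,p2) (q1,q2)" "(2::'k::field) \<noteq> 0"
  shows "p1*q2 \<noteq> p2*q1"
proof
  assume h: "p1*q2 = p2*q1"
  obtain c where c: "(a0*b2 - a2*b0)^2 - (a0*b1 - a1*b0)*(a1*b2 - a2*b1) \<noteq> (0::'k::field)"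
   "2*a0*b1 - 2*a1*b0 = c*(p2*q2)" "4*(a0*b2 - a2*b0) = c*(- (p2*q1 + p1*q2))"
   "2*a1*b2 - 2*a2*b1 = c*(p1*q1)" using qm_unfold[OF assms(1)] by metis
  have "16*((a0*b2 - a2*b0)^2 - (a0*b1 - a1*b0)*(a1*b2 - a2*b1)) =
     (4*(a0*b2 - a2*b0))^2 - 4*(2*a0*b1 - 2*a1*b0)*(2*a1*b2 - 2*a2*b1)"
    by (simp add: algebra_simps power2_eq_square)
  also have "\<dots> = c^2*((p2*q1 + p1*q2)^2 - 4*(p2*q2)*(p1*q1))" unfolding c(2-4)
    by (simp add: algebra_simps power2_eq_square)
  also have "\<dots> = c^2*(p1*q2 - p2*q1)^2" by (simp add: algebra_simps power2_eq_square)
  also have "\<dots> = 0" using h by simp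
  finally have "(2::'k)^4 * ((a0*b2 - a2*b0)^2 - (a0*b1 - a1*b0)*(a1*b2 - a2*b1)) = 0" by simp
  then show False using c(1) assms(2) by (simp only: mult_eq_0_iff power_eq_0_iff) simp
qed

lemma fiber_raw:
  fixes a0 a1 a2 b0 b1 b2 x1 x2 p1 p2 :: "'k::field"
  assumes "2*(a0*b1 - a1*b0)*p1^2 + 4*(a0*b2-a2*b0)*p1*p2 + 2*(a1*b2-a2*b1)*p2^2 = 0"
   "(a0*b2 - a2*b0)^2 - (a0*b1 - a1*b0)*(a1*b2 - a2*b1) \<noteq> 0"
   "(2::'k) \<noteq> 0" "(p1,p2) \<noteq> (0,0)"
   "(a0*x1^2 + a1*x1*x2 + a2*x2^2)*(b0*p1^2 + b1*p1*p2 + b2*p2^2) = (b0*x1^2 + b1*x1*x2 + b2*x2^2)*(a0*p1^2 + a1*p1*p2 + a2*p2^2)"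
  shows "x1*p2 = x2*p1"
proof (cases "p1 = 0")
  case False
  then show ?thesis using assms(1,2,3,5) by algebra
next
  case True
  then have "p2 \<noteq> 0" using assms(4) by auto
  then show ?thesis using assms(1,2,3,5) by algebra
qed

lemma fiber:
  fixes F G :: "'k::field qform" and P Q X :: "'k pt"
  assumes qm: "quad_morph F G P Q" and two: "(2::'k::field) \<noteq> 0" and X: "X \<noteq> (0,0)"
    and h: "proj_eq (map_vec F G X) (map_vec F G P)"
  shows "proj_eq X P"
proof -
  obtain a0 a1 a2 where F: "F = (a0,a1,a2)" by (cases F) auto
  obtain b0 b1 b2 where G: "G = (b0,b1,b2)" by (cases G) auto
  obtain p1 p2 where P: "P = (p1,p2)" by (cases P) auto
  obtain q1 q2 where Q: "Q = (q1,q2)" by (cases Q) auto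
  obtain x1 x2 where Xe: "X = (x1,x2)" by (cases X) auto
  note qm' = qm[unfolded F G P Q]
  obtain c where c: "(p1,p2) \<noteq> (0,0)"
   "(a0*b2 - a2*b0)^2 - (a0*b1 - a1*b0)*(a1*b2 - a2*b1) \<noteq> (0::'k::field)"
    using qm_unfold[OF qm'] by metis
  have J: "2*(a0*b1 - a1*b0)*p1^2 + 4*(a0*b2-a2*b0)*p1*p2 + 2*(a1*b2-a2*b1)*p2^2 = 0"
    using jacP[OF qm'] .
  have nzX: "map_vec F G X \<noteq> (0,0)" using mv_nz[OF c(2), of x1 x2] X unfolding F G Xe by auto
  have nzP: "map_vec F G P \<noteq> (0,0)" using mv_nz[OF c(2) c(1)] unfolding F G P by auto
  have "(a0*x1^2 + a1*x1*x2 + a2*x2^2)*(b0*p1^2 + b1*p1*p2 + b2*p2^2) = (b0*x1^2 + b1*x1*x2 + b2*x2^2)*(a0*p1^2 + a1*p1*p2 + a2*p2^2)"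
    using h nzX nzP unfolding F G P Xe mv_simp by (subst (asm) proj_eq_cross) auto
  then have "x1*p2 = x2*p1" using fiber_raw[OF J c(2) two c(1)] by blast
  then show ?thesis unfolding Xe P using X c(1) Xe P by (subst proj_eq_cross) auto
qed


lemma qm_nz:
  fixes F G :: "'k::field qform" and P Q X :: "'k pt"
  assumes qm: "quad_morph F G P Q"
  shows "P \<noteq> (0,0)" "Q \<noteq> (0,0)" "X \<noteq> (0,0) \<Longrightarrow> map_vec F G X \<noteq> (0,0)"
proof -
  show "P \<noteq> (0,0)" "Q \<noteq> (0,0)" using qm unfolding quad_morph_def by auto
  assume X: "X \<noteq> (0,0)"
  obtain a0 a1 a2 where F: "F = (a0,a1,a2)" by (cases F) auto
  obtain b0 b1 b2 where G: "G = (b0,b1,b2)" by (cases G) auto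
  obtain x1 x2 where Xe: "X = (x1,x2)" by (cases X) auto
  have "(a0*b2 - a2*b0)^2 - (a0*b1 - a1*b0)*(a1*b2 - a2*b1) \<noteq> 0"
    using qm unfolding F G quad_morph_def qf_res_def by auto
  from mv_nz[OF this, of x1 x2] X show "map_vec F G X \<noteq> (0,0)" unfolding F G Xe by auto
qed

lemma indep_gen:
  fixes F G :: "'k::field qform" and P Q :: "'k pt"
  assumes qm: "quad_morph F G P Q" and two: "(2::'k) \<noteq> 0"
  shows "\<not> proj_eq P Q"
proof -
  obtain a0 a1 a2 where F: "F = (a0,a1,a2)" by (cases F) auto
  obtain b0 b1 b2 where G: "G = (b0,b1,b2)" by (cases G) auto
  obtain p1 p2 where P: "P = (p1,p2)" by (cases P) auto
  obtain q1 q2 where Q: "Q = (q1,q2)" by (cases Q) auto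
  have "p1*q2 \<noteq> p2*q1" using indep[OF qm[unfolded F G P Q] two] .
  then show ?thesis using qm_nz(1,2)[OF qm] unfolding P Q by (subst proj_eq_cross) auto
qed

lemma postcrit_sym: "postcrit F G P Q = postcrit F G Q P"
  unfolding postcrit_def by auto

lemma pc_memP: "n \<ge> 1 \<Longrightarrow> pt_class ((map_vec F G ^^ n) P) \<in> postcrit F G P Q"
  unfolding postcrit_def by (rule UnI1) (rule CollectI, rule exI[of _ n], simp)
lemma pc_memQ: "n \<ge> 1 \<Longrightarrow> pt_class ((map_vec F G ^^ n) Q) \<in> postcrit F G P Q"
  unfolding postcrit_def by (rule UnI2) (rule CollectI, rule exI[of _ n], simp)

lemma b_to_a:
  fixes F G :: "'k::field qform" and P Q :: "'k pt"
  assumes qm: "quad_morph F G P Q" and two: "(2::'k) \<noteq> 0"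
    and nP: "\<not> proj_eq (map_vec F G P) P" and nQ: "\<not> proj_eq (map_vec F G P) Q"
  shows "infinite (postcrit F G P Q) \<or> 3 \<le> card (postcrit F G P Q)"
proof -
  define f where "f = map_vec F G"
  define R where "R = f P"
  define S where "S = f Q"
  define T where "T = f R"
  have Rnz: "R \<noteq> (0,0)" unfolding R_def f_def by (rule qm_nz(3)[OF qm qm_nz(1)[OF qm]])
  have RS: "\<not> proj_eq R S"
  proof
    assume "proj_eq R S"
    then have "proj_eq (f Q) (f P)" unfolding R_def S_def by (rule proj_eq_sym)
    then have "proj_eq Q P" using fiber[OF qm two qm_nz(2)[OF qm]] unfolding f_def by blast
    then show False using indep_gen[OF qm two] proj_eq_sym by blast
  qed
  have TR: "\<not> proj_eq T R"
  proof
    assume "proj_eq T R"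
    then have "proj_eq (f R) (f P)" unfolding T_def R_def by simp
    then have "proj_eq R P" using fiber[OF qm two Rnz] unfolding f_def by blast
    then show False using nP unfolding R_def f_def by simp
  qed
  have TS: "\<not> proj_eq T S"
  proof
    assume "proj_eq T S"
    then have "proj_eq (f R) (f Q)" unfolding T_def S_def by simp
    then have "proj_eq R Q" using fiber[OF qm_sym[OF qm] two Rnz] unfolding f_def by blast
    then show False using nQ unfolding R_def f_def by simp
  qed
  have sub: "{pt_class R, pt_class S, pt_class T} \<subseteq> postcrit F G P Q"
  proof -
    have "pt_class R = pt_class ((map_vec F G ^^ 1) P)" unfolding R_def f_def by simp
    moreover have "pt_class S = pt_class ((map_vec F G ^^ 1) Q)" unfolding S_def f_def by simp
    moreover have "pt_class T = pt_class ((map_vec F G ^^ 2) P)"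
      unfolding T_def R_def f_def by (simp add: numeral_2_eq_2)
    ultimately show ?thesis using pc_memP[of 1 F G P Q] pc_memQ[of 1 F G Q P] pc_memP[of 2 F G P Q] by simp
  qed
  have card3: "card {pt_class R, pt_class S, pt_class T} = 3"
  proof -
    have "pt_class R \<noteq> pt_class S" "pt_class T \<noteq> pt_class R" "pt_class T \<noteq> pt_class S"
      using RS TR TS pt_class_eq_iff by blast+
    then show ?thesis by auto
  qed
  show ?thesis
  proof (cases "finite (postcrit F G P Q)")
    case True
    then show ?thesis using card_mono[OF True sub] card3 by simp
  qed simp
qed

lemma notb_to_nota:
  fixes F G :: "'k::field qform" and P Q :: "'k pt"
  assumes hP: "proj_eq (map_vec F G P) P \<or> proj_eq (map_vec F G P) Q"
    and hQ: "proj_eq (map_vec F G Q) P \<or> proj_eq (map_vec F G Q) Q"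
  shows "finite (postcrit F G P Q) \<and> card (postcrit F G P Q) \<le> 2"
proof -
  define f where "f = map_vec F G"
  define Sset where "Sset = {Y. proj_eq Y P \<or> proj_eq Y Q}"
  have cl: "f Y \<in> Sset" if "Y \<in> Sset" for Y
  proof -
    from that have "proj_eq Y P \<or> proj_eq Y Q" unfolding Sset_def by auto
    then have "proj_eq (f Y) (f P) \<or> proj_eq (f Y) (f Q)" unfolding f_def using proj_eq_mv by blast
    then show ?thesis using hP hQ proj_eq_trans unfolding Sset_def f_def by blast
  qed
  have it: "(f ^^ Suc m) X \<in> Sset" if "X = P \<or> X = Q" for m X
  proof (induction m)
    case 0
    then show ?case using hP hQ that unfolding Sset_def f_def by auto
  next
    case (Suc m)
    then show ?case using cl by simp
  qed
  have "postcrit F G P Q \<subseteq> {pt_class P, pt_class Q}"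
  proof
    fix C assume "C \<in> postcrit F G P Q"
    then obtain n X where n: "n \<ge> 1" "X = P \<or> X = Q" "C = pt_class ((f ^^ n) X)"
      unfolding postcrit_def f_def by (elim UnE CollectE exE conjE) blast+
    then obtain m where "n = Suc m" by (cases n) auto
    then have "(f ^^ n) X \<in> Sset" using it n(2) by blast
    then have "proj_eq ((f ^^ n) X) P \<or> proj_eq ((f ^^ n) X) Q" unfolding Sset_def by simp
    then have "C = pt_class P \<or> C = pt_class Q" unfolding n(3) using pt_class_eq_iff by blast
    then show "C \<in> {pt_class P, pt_class Q}" by blast
  qed
  moreover have "card {pt_class P, pt_class Q} \<le> 2" by (simp add: card_insert_le_m1)
  ultimately show ?thesis
    using card_mono[of "{pt_class P, pt_class Q}" "postcrit F G P Q"] finite_subset by fastforce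
qed



lemma eval_add: "qf_eval (qf_add F G) X = qf_eval F X + qf_eval G X"
  by (cases F; cases G; cases X) (simp add: qf_eval_def qf_add_def algebra_simps)
lemma eval_scale: "qf_eval (qf_scale c F) X = c * qf_eval F X"
  by (cases F; cases X) (simp add: qf_eval_def qf_scale_def algebra_simps)
lemma eval_subst: "qf_eval (qf_subst F M) X = qf_eval F (mat_apply M X)"
  by (cases F; cases M; cases X) (simp add: qf_eval_def qf_subst_def mat_apply_def algebra_simps power2_eq_square)

lemma transport:
  assumes M: "M = (al,be,ga,de)"
    and e1: "qf_add (qf_scale al F) (qf_scale be G) = qf_scale lam (qf_subst F' M)"
    and e2: "qf_add (qf_scale ga F) (qf_scale de G) = qf_scale lam (qf_subst G' M)"
  shows "mat_apply M (map_vec F G X) = pt_scale lam (map_vec F' G' (mat_apply M X))"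
proof -
  have 1: "al * qf_eval F X + be * qf_eval G X = lam * qf_eval F' (mat_apply M X)"
    using arg_cong[OF e1, of "\<lambda>H. qf_eval H X"] by (simp add: eval_add eval_scale eval_subst)
  have 2: "ga * qf_eval F X + de * qf_eval G X = lam * qf_eval G' (mat_apply M X)"
    using arg_cong[OF e2, of "\<lambda>H. qf_eval H X"] by (simp add: eval_add eval_scale eval_subst)
  show ?thesis using 1 2 by (simp add: M map_vec_def mat_apply_def pt_scale_def)
qed

lemma iso_dest:
  assumes "qm_iso_by M F G P Q F' G' P' Q'"
  shows "mat_det M \<noteq> 0" "\<exists>lam. lam \<noteq> 0 \<and> (\<forall>X. mat_apply M (map_vec F G X) = pt_scale lam (map_vec F' G' (mat_apply M X)))"
    "proj_eq (mat_apply M P) P'" "proj_eq (mat_apply M Q) Q'"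
proof -
  show "mat_det M \<noteq> 0" "proj_eq (mat_apply M P) P'" "proj_eq (mat_apply M Q) Q'"
    using assms unfolding qm_iso_by_def by auto
  obtain al be ga de where M: "M = (al,be,ga,de)" by (cases M) auto
  from assms obtain lam where "lam \<noteq> 0"
    "qf_add (qf_scale al F) (qf_scale be G) = qf_scale lam (qf_subst F' M)"
    "qf_add (qf_scale ga F) (qf_scale de G) = qf_scale lam (qf_subst G' M)"
    unfolding qm_iso_by_def M by auto
  then show "\<exists>lam. lam \<noteq> 0 \<and> (\<forall>X. mat_apply M (map_vec F G X) = pt_scale lam (map_vec F' G' (mat_apply M X)))"
    using transport[OF M] by blast
qed

lemma mat_scale: "mat_apply M (pt_scale c X) = pt_scale c (mat_apply M X)"
  by (cases M; cases X) (simp add: mat_apply_def pt_scale_def algebra_simps)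

lemma mat_proj_inv:
  fixes M :: "'k::field mat2"
  assumes d: "mat_det M \<noteq> 0" and h: "proj_eq (mat_apply M X) (mat_apply M Y)"
  shows "proj_eq X Y"
proof -
  obtain c where c: "c \<noteq> 0" "mat_apply M X = pt_scale c (mat_apply M Y)" using h unfolding proj_eq_def by auto
  then have "mat_apply M X = mat_apply M (pt_scale c Y)" by (simp add: mat_scale)
  moreover have "inj (mat_apply M)"
  proof (rule injI)
    fix u v assume e: "mat_apply M u = mat_apply M v"
    obtain al be ga de where M: "M = (al,be,ga,de)" by (cases M) auto
    obtain u1 u2 where u: "u = (u1,u2)" by (cases u) auto
    obtain v1 v2 where v: "v = (v1,v2)" by (cases v) auto
    have det: "al*de - be*ga \<noteq> 0" using d unfolding M mat_det_def by simp
    have e1: "al*u1 + be*u2 = al*v1 + be*v2" "ga*u1 + de*u2 = ga*v1 + de*v2"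
      using e unfolding M u v mat_apply_def by auto
    have "u1 = v1" using e1 det by algebra
    moreover have "u2 = v2" using e1 det by algebra
    ultimately show "u = v" using u v by simp
  qed
  ultimately have "X = pt_scale c Y" by (meson injD)
  then show ?thesis using c(1) unfolding proj_eq_def by blast
qed

lemma proj_eq_scaleI: "c \<noteq> 0 \<Longrightarrow> u = pt_scale c v \<Longrightarrow> proj_eq u v"
  unfolding proj_eq_def by blast

lemma iso_notb:
  fixes F G :: "'k::field qform" and P Q :: "'k pt"
  assumes qm: "quad_morph F G P Q" and a: "a \<noteq> 0"
    and iso: "qm_isomorphic F G P Q (std_plus_F a) std_plus_G pt_zero pt_inf \<or>
              qm_isomorphic F G P Q (std_minus_F a) std_minus_G pt_zero pt_inf"
  shows "(proj_eq (map_vec F G P) P \<or> proj_eq (map_vec F G P) Q) \<and>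
         (proj_eq (map_vec F G Q) P \<or> proj_eq (map_vec F G Q) Q)"
proof -
  obtain M F' G' where I: "qm_iso_by M F G P Q F' G' pt_zero pt_inf"
    and FG: "(F' = std_plus_F a \<and> G' = std_plus_G) \<or> (F' = std_minus_F a \<and> G' = std_minus_G)"
    using iso unfolding qm_isomorphic_def by blast
  note D = iso_dest[OF I]
  obtain lam where lam: "lam \<noteq> 0" "\<And>X. mat_apply M (map_vec F G X) = pt_scale lam (map_vec F' G' (mat_apply M X))"
    using D(2) by blast
  obtain c where c: "c \<noteq> 0" "mat_apply M P = pt_scale c pt_zero" using D(3) unfolding proj_eq_def by blast
  obtain d where d: "d \<noteq> 0" "mat_apply M Q = pt_scale d pt_inf" using D(4) unfolding proj_eq_def by blast
  have MP: "mat_apply M P = (0, c)" and MQ: "mat_apply M Q = (d, 0)"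
    using c d by (simp_all add: pt_scale_def pt_zero_def pt_inf_def)
  from FG show ?thesis
  proof
    assume "F' = std_plus_F a \<and> G' = std_plus_G"
    then have fP: "mat_apply M (map_vec F G P) = (0, lam*c^2)" and fQ: "mat_apply M (map_vec F G Q) = (lam*a*d^2, 0)"
      using lam(2)[of P] lam(2)[of Q] MP MQ
      by (simp_all add: std_plus_F_def std_plus_G_def map_vec_def qf_eval_def pt_scale_def power2_eq_square)
    have "proj_eq (mat_apply M (map_vec F G P)) (mat_apply M P)"
      by (rule proj_eq_scaleI[of "lam*c"]) (use lam c fP MP in \<open>auto simp: pt_scale_def power2_eq_square pt_zero_def pt_inf_def\<close>)
    moreover have "proj_eq (mat_apply M (map_vec F G Q)) (mat_apply M Q)"
      by (rule proj_eq_scaleI[of "lam*a*d"]) (use lam a d fQ MQ in \<open>auto simp: pt_scale_def power2_eq_square pt_zero_def pt_inf_def\<close>)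
    ultimately show ?thesis using mat_proj_inv[OF D(1)] by blast
  next
    assume "F' = std_minus_F a \<and> G' = std_minus_G"
    then have fP: "mat_apply M (map_vec F G P) = (lam*a*c^2, 0)" and fQ: "mat_apply M (map_vec F G Q) = (0, lam*d^2)"
      using lam(2)[of P] lam(2)[of Q] MP MQ
      by (simp_all add: std_minus_F_def std_minus_G_def map_vec_def qf_eval_def pt_scale_def power2_eq_square)
    have "proj_eq (mat_apply M (map_vec F G P)) (mat_apply M Q)"
      by (rule proj_eq_scaleI[of "lam*a*c^2/d"]) (use lam a c d fP MQ in \<open>auto simp: pt_scale_def pt_zero_def pt_inf_def power2_eq_square\<close>)
    moreover have "proj_eq (mat_apply M (map_vec F G Q)) (mat_apply M P)"
      by (rule proj_eq_scaleI[of "lam*d^2/c"]) (use lam c d fQ MP in \<open>auto simp: pt_scale_def pt_zero_def pt_inf_def power2_eq_square\<close>)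
    ultimately show ?thesis using mat_proj_inv[OF D(1)] by blast
  qed
qed

lemma dbl_raw:
  fixes a0 a1 a2 b0 b1 b2 t1 t2 p1 p2 :: "'k::field"
  assumes J: "2*(a0*b1 - a1*b0)*p1^2 + 4*(a0*b2-a2*b0)*p1*p2 + 2*(a1*b2-a2*b1)*p2^2 = 0"
   and res: "(a0*b2 - a2*b0)^2 - (a0*b1 - a1*b0)*(a1*b2 - a2*b1) \<noteq> 0"
   and two: "(2::'k) \<noteq> 0" and P: "(p1,p2) \<noteq> (0,0)" and T: "(t1,t2) \<noteq> (0,0)"
   and h: "t2*(a0*p1^2 + a1*p1*p2 + a2*p2^2) = t1*(b0*p1^2 + b1*p1*p2 + b2*p2^2)"
  shows "\<exists>k. k \<noteq> 0 \<and> t2*a0 - t1*b0 = k*p2^2 \<and> t2*a1 - t1*b1 = k*(-2*p1*p2) \<and> t2*a2 - t1*b2 = k*p1^2"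
proof -
  have nz: False if "t2*a0 - t1*b0 = 0" "t2*a1 - t1*b1 = 0" "t2*a2 - t1*b2 = 0"
  proof (cases "t1 = 0")
    case False then show False using res that by algebra
  next
    case True then have "t2 \<noteq> 0" using T by auto
    then show False using res that by algebra
  qed
  show ?thesis
  proof (cases "p2 = 0")
    case False
    have e1: "(t2*a1 - t1*b1)*p2^2 = (t2*a0 - t1*b0)*(-2*p1*p2)" using J res two False h by algebra
    have e2: "(t2*a2 - t1*b2)*p2^2 = (t2*a0 - t1*b0)*(p1^2)" using J res two False h by algebra
    define k where "k = (t2*a0 - t1*b0)/p2^2"
    have k0: "t2*a0 - t1*b0 = k*p2^2" unfolding k_def using False by simp
    have k1: "t2*a1 - t1*b1 = k*(-2*p1*p2)" unfolding k_def using False e1 by (simp add: field_simps)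
    have k2: "t2*a2 - t1*b2 = k*p1^2" unfolding k_def using False e2 by (simp add: field_simps)
    have "k \<noteq> 0" using nz k0 k1 k2 by auto
    then show ?thesis using k0 k1 k2 by blast
  next
    case True
    then have p1: "p1 \<noteq> 0" using P by auto
    have e1: "(t2*a1 - t1*b1)*p1^2 = (t2*a2 - t1*b2)*(-2*p1*p2)" using J res two p1 h by algebra
    have e2: "(t2*a0 - t1*b0)*p1^2 = (t2*a2 - t1*b2)*(p2^2)" using J res two p1 h by algebra
    define k where "k = (t2*a2 - t1*b2)/p1^2"
    have k2: "t2*a2 - t1*b2 = k*p1^2" unfolding k_def using p1 by simp
    have k1: "t2*a1 - t1*b1 = k*(-2*p1*p2)" unfolding k_def using p1 e1 by (simp add: field_simps)
    have k0: "t2*a0 - t1*b0 = k*p2^2" unfolding k_def using p1 e2 by (simp add: field_simps)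
    have "k \<noteq> 0" using nz k0 k1 k2 by auto
    then show ?thesis using k0 k1 k2 by blast
  qed
qed

lemma dbl:
  fixes F G :: "'k::field qform" and P Q :: "'k pt"
  assumes qm: "quad_morph F G P Q" and two: "(2::'k) \<noteq> 0"
    and Te: "T = (t1,t2)" and T: "T \<noteq> (0,0)" and h: "proj_eq (map_vec F G P) T" and P: "P = (p1,p2)"
  shows "\<exists>k. k \<noteq> 0 \<and> qf_add (qf_scale t2 F) (qf_scale (-t1) G) = qf_scale k (p2^2, -2*p1*p2, p1^2)"
proof -
  obtain a0 a1 a2 where F: "F = (a0,a1,a2)" by (cases F) auto
  obtain b0 b1 b2 where G: "G = (b0,b1,b2)" by (cases G) auto
  obtain q1 q2 where Q: "Q = (q1,q2)" by (cases Q) auto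
  note qm' = qm[unfolded F G P Q]
  obtain c where c: "(p1,p2) \<noteq> (0,0)"
   "(a0*b2 - a2*b0)^2 - (a0*b1 - a1*b0)*(a1*b2 - a2*b1) \<noteq> (0::'k::field)"
    using qm_unfold[OF qm'] by metis
  obtain s where s: "map_vec F G P = pt_scale s (t1,t2)" using h Te unfolding proj_eq_def by blast
  have hh: "t2*(a0*p1^2 + a1*p1*p2 + a2*p2^2) = t1*(b0*p1^2 + b1*p1*p2 + b2*p2^2)"
    using s unfolding F G P mv_simp pt_scale_def by (auto simp: algebra_simps)
  obtain k where k: "k \<noteq> 0" "t2*a0 - t1*b0 = k*p2^2" "t2*a1 - t1*b1 = k*(-2*p1*p2)" "t2*a2 - t1*b2 = k*p1^2"
    using dbl_raw[OF jacP[OF qm'] c(2) two c(1) T[unfolded Te] hh] by blast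
  show ?thesis
    by (rule exI[of _ k]) (use k in \<open>simp add: F G qf_add_def qf_scale_def algebra_simps\<close>)
qed

lemma qscale_scale: "qf_scale a (qf_scale b H) = qf_scale (a*b) H"
  by (cases H) (simp add: qf_scale_def algebra_simps)

lemma notb_iso:
  fixes F G :: "'k::field qform" and P Q :: "'k pt"
  assumes qm: "quad_morph F G P Q" and two: "(2::'k) \<noteq> 0"
    and hP: "proj_eq (map_vec F G P) P \<or> proj_eq (map_vec F G P) Q"
    and hQ: "proj_eq (map_vec F G Q) P \<or> proj_eq (map_vec F G Q) Q"
  shows "\<exists>a::'k. a \<noteq> 0 \<and>
                   (qm_isomorphic F G P Q (std_plus_F a) std_plus_G pt_zero pt_inf \<or>
                    qm_isomorphic F G P Q (std_minus_F a) std_minus_G pt_zero pt_inf)"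
proof -
  obtain p1 p2 where P: "P = (p1,p2)" by (cases P) auto
  obtain q1 q2 where Q: "Q = (q1,q2)" by (cases Q) auto
  have Pnz: "(p1,p2) \<noteq> (0,0)" and Qnz: "(q1,q2) \<noteq> (0,0)" using qm_nz[OF qm] P Q by auto
  have ind: "\<not> proj_eq P Q" using indep_gen[OF qm two] .
  have dd: "p1*q2 - p2*q1 \<noteq> 0" using ind Pnz Qnz unfolding P Q by (subst (asm) proj_eq_cross) auto
  define M where "M = (p2, -p1, q2, -q1)"
  have det: "mat_det M \<noteq> 0" unfolding M_def mat_det_def using dd by (simp add: algebra_simps)
  have MP: "proj_eq (mat_apply M P) pt_zero"
    by (rule proj_eq_scaleI[of "p1*q2 - p2*q1"]) (use dd in \<open>simp_all add: M_def P mat_apply_def pt_scale_def pt_zero_def algebra_simps\<close>)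
  have MQ: "proj_eq (mat_apply M Q) pt_inf"
    by (rule proj_eq_scaleI[of "-(p1*q2 - p2*q1)"]) (use dd in \<open>simp_all add: M_def Q mat_apply_def pt_scale_def pt_inf_def algebra_simps\<close>)
  define sP where "sP = (p2^2, -2*p1*p2, p1^2)"
  define sQ where "sQ = (q2^2, -2*q1*q2, q1^2)"
  have sub1: "qf_subst (a,0,0) M = qf_scale a sP" for a
    by (simp add: M_def sP_def qf_subst_def qf_scale_def algebra_simps power2_eq_square)
  have sub2: "qf_subst (0,0,1) M = sQ"
    by (simp add: M_def sQ_def qf_subst_def qf_scale_def algebra_simps power2_eq_square)
  have sub3: "qf_subst (0,0,a) M = qf_scale a sQ" for a
    by (simp add: M_def sQ_def qf_subst_def qf_scale_def algebra_simps power2_eq_square)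
  have sub4: "qf_subst (1,0,0) M = sP"
    by (simp add: M_def sP_def qf_subst_def qf_scale_def algebra_simps power2_eq_square)
  have fb: "\<not> proj_eq (map_vec F G Q) (map_vec F G P)"
    using fiber[OF qm two qm_nz(2)[OF qm]] ind proj_eq_sym by blast
  consider "proj_eq (map_vec F G P) P" "proj_eq (map_vec F G Q) Q"
    | "proj_eq (map_vec F G P) Q" "proj_eq (map_vec F G Q) P"
    using hP hQ fb proj_eq_sym proj_eq_trans by metis
  then show ?thesis
  proof cases
    case 1
    obtain k1 where k1: "k1 \<noteq> 0" "qf_add (qf_scale p2 F) (qf_scale (-p1) G) = qf_scale k1 sP"
      using dbl[OF qm two P qm_nz(1)[OF qm] 1(1) P] unfolding sP_def P by blast
    obtain k2 where k2: "k2 \<noteq> 0" "qf_add (qf_scale q2 F) (qf_scale (-q1) G) = qf_scale k2 sQ"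
      using dbl[OF qm_sym[OF qm] two Q qm_nz(2)[OF qm] 1(2) Q] unfolding sQ_def Q by blast
    have "qm_iso_by M F G P Q (std_plus_F (k1/k2)) std_plus_G pt_zero pt_inf"
      unfolding qm_iso_by_def std_plus_F_def std_plus_G_def
      using det MP MQ k1 k2 by (auto simp: M_def sub1[unfolded M_def] sub2[unfolded M_def] qscale_scale intro!: exI[of _ k2])
    moreover have "k1/k2 \<noteq> 0" using k1 k2 by simp
    ultimately show ?thesis unfolding qm_isomorphic_def by blast
  next
    case 2
    obtain k1 where k1: "k1 \<noteq> 0" "qf_add (qf_scale p2 F) (qf_scale (-p1) G) = qf_scale k1 sQ"
      using dbl[OF qm_sym[OF qm] two P qm_nz(1)[OF qm] 2(2) Q] unfolding sQ_def P by blast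
    obtain k2 where k2: "k2 \<noteq> 0" "qf_add (qf_scale q2 F) (qf_scale (-q1) G) = qf_scale k2 sP"
      using dbl[OF qm two Q qm_nz(2)[OF qm] 2(1) P] unfolding sP_def Q by blast
    have "qm_iso_by M F G P Q (std_minus_F (k1/k2)) std_minus_G pt_zero pt_inf"
      unfolding qm_iso_by_def std_minus_F_def std_minus_G_def
      using det MP MQ k1 k2 by (auto simp: M_def sub3[unfolded M_def] sub4[unfolded M_def] qscale_scale intro!: exI[of _ k2])
    moreover have "k1/k2 \<noteq> 0" using k1 k2 by simp
    ultimately show ?thesis unfolding qm_isomorphic_def by blast
  qed
qed

lemma E4:
  fixes ga dd be p1 p2 q1 q2 r1 r2 :: "'k::field"
  assumes "p1*q2 \<noteq> p2*q1" "p1*r2 \<noteq> p2*r1" "q1*r2 \<noteq> q2*r1"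
   "ga*p1^2 + dd*p1*p2 + be*p2^2 = 0"
   "ga*q1^2 + dd*q1*q2 + be*q2^2 = 0"
   "ga*r1^2 + dd*r1*r2 + be*r2^2 = 0"
  shows "ga = 0 \<and> dd = 0 \<and> be = 0"
proof -
  have "ga = 0" using assms by algebra
  moreover have "dd = 0" using assms by algebra
  moreover have "be = 0" using assms by algebra
  ultimately show ?thesis by simp
qed

lemma eig:
  fixes al be ga de s v1 v2 :: "'k::field"
  assumes "mat_apply (al,be,ga,de) (v1,v2) = pt_scale s (v1,v2)"
  shows "ga*v1^2 + (de-al)*v1*v2 + (-be)*v2^2 = 0"
proof -
  have "al*v1 + be*v2 = s*v1" "ga*v1 + de*v2 = s*v2"
    using assms unfolding mat_apply_def pt_scale_def by auto
  then show ?thesis by algebra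
qed

lemma pscale_scale: "pt_scale a (pt_scale b v) = pt_scale (a*b) v"
  by (cases v) (simp add: pt_scale_def algebra_simps)

lemma aut:
  fixes F G :: "'k::field qform" and P Q :: "'k pt"
  assumes qm: "quad_morph F G P Q" and two: "(2::'k) \<noteq> 0"
    and nP: "\<not> proj_eq (map_vec F G P) P" and nQ: "\<not> proj_eq (map_vec F G P) Q"
  shows "qm_aut_trivial F G P Q"
  unfolding qm_aut_trivial_def
proof (intro allI impI)
  fix M assume I: "qm_iso_by M F G P Q F G P Q"
  obtain al be ga de where M: "M = (al,be,ga,de)" by (cases M) auto
  note D = iso_dest[OF I]
  obtain lam where lam: "\<And>X. mat_apply M (map_vec F G X) = pt_scale lam (map_vec F G (mat_apply M X))"
    using D(2) by blast
  obtain c where c: "mat_apply M P = pt_scale c P" using D(3) unfolding proj_eq_def by blast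
  obtain c' where c': "mat_apply M Q = pt_scale c' Q" using D(4) unfolding proj_eq_def by blast
  define R where "R = map_vec F G P"
  have cR: "mat_apply M R = pt_scale (lam*c^2) R"
    unfolding R_def lam c mv_scale pscale_scale ..
  obtain p1 p2 where P: "P = (p1,p2)" by (cases P) auto
  obtain q1 q2 where Q: "Q = (q1,q2)" by (cases Q) auto
  obtain r1 r2 where R: "R = (r1,r2)" by (cases R) auto
  have Pnz: "(p1,p2) \<noteq> (0,0)" and Qnz: "(q1,q2) \<noteq> (0,0)" using qm_nz[OF qm] P Q by auto
  have Rnz: "(r1,r2) \<noteq> (0,0)" using qm_nz(3)[OF qm qm_nz(1)[OF qm]] R unfolding R_def by auto
  have i1: "p1*q2 \<noteq> p2*q1" using indep_gen[OF qm two] Pnz Qnz unfolding P Q by (subst (asm) proj_eq_cross) auto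
  have i2: "p1*r2 \<noteq> p2*r1"
  proof
    assume "p1*r2 = p2*r1"
    then have "proj_eq R P" using Pnz Rnz unfolding P R by (subst proj_eq_cross) (auto simp: algebra_simps)
    then show False using nP unfolding R_def by simp
  qed
  have i3: "q1*r2 \<noteq> q2*r1"
  proof
    assume "q1*r2 = q2*r1"
    then have "proj_eq R Q" using Qnz Rnz unfolding Q R by (subst proj_eq_cross) (auto simp: algebra_simps)
    then show False using nQ unfolding R_def by simp
  qed
  have "ga = 0 \<and> de - al = 0 \<and> -be = 0"
    by (rule E4[OF i1 i2 i3 eig eig eig]) (use c c' cR M P Q R in auto)
  then show "case M of (al, be, ga, de) \<Rightarrow> be = 0 \<and> ga = 0 \<and> al = de" unfolding M by simp
qed

theorem proposition1p4:
  fixes F G :: "'k::field qform" and P Q :: "'k pt"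
  assumes char: "(2::'k) \<noteq> 0"
    and qm: "quad_morph F G P Q"
  shows "((infinite (postcrit F G P Q) \<or> 3 \<le> card (postcrit F G P Q))
            \<longleftrightarrow> ((\<not> proj_eq (map_vec F G P) P \<and> \<not> proj_eq (map_vec F G P) Q) \<or>
                 (\<not> proj_eq (map_vec F G Q) P \<and> \<not> proj_eq (map_vec F G Q) Q)))
       \<and> (((\<not> proj_eq (map_vec F G P) P \<and> \<not> proj_eq (map_vec F G P) Q) \<or>
             (\<not> proj_eq (map_vec F G Q) P \<and> \<not> proj_eq (map_vec F G Q) Q))
            \<longleftrightarrow> \<not> (\<exists>a::'k. a \<noteq> 0 \<and>
                   (qm_isomorphic F G P Q (std_plus_F a) std_plus_G pt_zero pt_inf \<or>
                    qm_isomorphic F G P Q (std_minus_F a) std_minus_G pt_zero pt_inf)))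
       \<and> ((infinite (postcrit F G P Q) \<or> 3 \<le> card (postcrit F G P Q))
            \<longrightarrow> qm_aut_trivial F G P Q)"
proof -
  have qm2: "quad_morph F G Q P" using qm_sym[OF qm] .
  define b where "b = ((\<not> proj_eq (map_vec F G P) P \<and> \<not> proj_eq (map_vec F G P) Q) \<or>
                 (\<not> proj_eq (map_vec F G Q) P \<and> \<not> proj_eq (map_vec F G Q) Q))"
  define A where "A = (infinite (postcrit F G P Q) \<or> 3 \<le> card (postcrit F G P Q))"
  have ab: "A \<longleftrightarrow> b"
  proof
    assume A
    show b
    proof (rule ccontr)
      assume "\<not> b"
      then have "finite (postcrit F G P Q) \<and> card (postcrit F G P Q) \<le> 2"
        using notb_to_nota[of F G P Q] unfolding b_def by blast
      then show False using \<open>A\<close> unfolding A_def by simp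
    qed
  next
    assume b
    then show A unfolding b_def A_def
      using b_to_a[OF qm char] b_to_a[OF qm2 char] postcrit_sym[of F G P Q] by metis
  qed
  have bc: "b \<longleftrightarrow> \<not> (\<exists>a::'k. a \<noteq> 0 \<and>
                   (qm_isomorphic F G P Q (std_plus_F a) std_plus_G pt_zero pt_inf \<or>
                    qm_isomorphic F G P Q (std_minus_F a) std_minus_G pt_zero pt_inf))"
    unfolding b_def using notb_iso[OF qm char] iso_notb[OF qm] by blast
  have aut': "b \<longrightarrow> qm_aut_trivial F G P Q"
  proof
    assume b
    then show "qm_aut_trivial F G P Q"
    proof (unfold b_def, elim disjE)
      assume "\<not> proj_eq (map_vec F G P) P \<and> \<not> proj_eq (map_vec F G P) Q"
      then show ?thesis using aut[OF qm char] by blast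
    next
      assume h: "\<not> proj_eq (map_vec F G Q) P \<and> \<not> proj_eq (map_vec F G Q) Q"
      have "qm_aut_trivial F G Q P" using aut[OF qm2 char] h by blast
      moreover have "qm_iso_by M F G Q P F G Q P = qm_iso_by M F G P Q F G P Q" for M
        unfolding qm_iso_by_def by auto
      ultimately show ?thesis unfolding qm_aut_trivial_def by simp
    qed
  qed
  show ?thesis using ab bc aut' unfolding A_def b_def by blast
qed

end
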